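(* Let $n>1$ be a natural number which is either multiplicatively $e$-perfect (i.e. $T_e(n)=n^2$) or multiplicatively $e$-superperfect (i.e. $T_e(T_e(n))=n^2$). Such an $n$ is a prime power; write $n=p^a$ with $p$ prime and $a\ge 1$. Then $n$ is $e$-harmonic of type $1$ if and only if $\frac{\sigma_e(n)}{p}$ divides $d_e(n)$.
   Context: For $n=p_1^{a_1}\cdots p_r^{a_r}>1$ (prime factorization), a divisor $d=p_1^{b_1}\cdots p_r^{b_r}$ of $n$ is an exponential divisor ($e$-divisor) if $b_i\mid a_i$ for all $i$ (in particular $b_i\ge 1$). $\sigma_e(n)$ is the sum of the $e$-divisors of $n$, $d_e(n)=d(a_1)\cdots d(a_r)$ is the number of $e$-divisors of $n$ (where $d(m)$ is the number of positive divisors of $m$), and $T_e(n)$ is the product of the $e$-divisors of $n$. An integer $n$ is called $e$-harmonic of type $1$ if $\sigma_e(n)\mid n\,d_e(n)$. It is known (Sándor) that $n>1$ is multiplicatively $e$-perfect iff $n=p^a$ with $p$ prime and $a$ an ordinary perfect number, and multiplicatively $e$-superperfect iff $n=p^a$ with $p$ prime and $\sigma(\sigma(a))=2a$. *)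

theory Defs
  imports "HOL-Computational_Algebra.Primes"
begin

text \<open>Exponential divisors: d = prod p_i^b_i divides n = prod p_i^a_i with b_i dvd a_i
  for every prime p_i of n (which forces b_i >= 1, since 0 dvd a_i only if a_i = 0).\<close>
definition e_divisors :: "nat \<Rightarrow> nat set" where
  "e_divisors n = {d. d dvd n \<and>
     (\<forall>p\<in>prime_factors n. multiplicity p d dvd multiplicity p n)}"

definition sigma_e :: "nat \<Rightarrow> nat" where
  "sigma_e n = (\<Sum>d\<in>e_divisors n. d)"

definition d_e :: "nat \<Rightarrow> nat" where
  "d_e n = (\<Prod>p\<in>prime_factors n. card {k. k dvd multiplicity p n})"

definition T_e :: "nat \<Rightarrow> nat" where
  "T_e n = (\<Prod>d\<in>e_divisors n. d)"

definition e_harmonic_type1 :: "nat \<Rightarrow> bool" where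
  "e_harmonic_type1 n \<longleftrightarrow> sigma_e n dvd n * d_e n"

end

theory Submission
  imports Defs
begin

lemma ediv_pp:
  assumes p: "prime (p::nat)" and a: "a \<ge> 1"
  shows "e_divisors (p^a) = (\<lambda>b. p^b) ` {b. b dvd a}"
proof -
  have pf: "prime_factors (p^a) = {p}" using p a by (simp add: prime_factorization_prime_power)
  have m: "\<And>k. multiplicity p (p^k) = k" using p by (simp add: multiplicity_prime_power)
  show ?thesis
  proof (rule set_eqI, rule iffI)
    fix d assume "d \<in> e_divisors (p^a)"
    then have "d dvd p^a" and md: "multiplicity p d dvd multiplicity p (p^a)"
      unfolding e_divisors_def using pf by auto
    then obtain k where "k \<le> a" "d = p^k" using divides_primepow_nat[OF p] by blast
    then show "d \<in> (\<lambda>b. p^b) ` {b. b dvd a}" using md m by auto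
  next
    fix d assume "d \<in> (\<lambda>b. p^b) ` {b. b dvd a}"
    then obtain k where k: "k dvd a" "d = p^k" by auto
    then have "k \<le> a" using a by (simp add: dvd_imp_le)
    then have "d dvd p^a" using k by (simp add: le_imp_power_dvd)
    then show "d \<in> e_divisors (p^a)" unfolding e_divisors_def using pf m k by auto
  qed
qed

theorem mainTheorem1:
  fixes n p a :: nat
  assumes "n > 1"
    and "T_e n = n ^ 2 \<or> T_e (T_e n) = n ^ 2"
    and "prime p" and "a \<ge> 1" and "n = p ^ a"
  shows "e_harmonic_type1 n \<longleftrightarrow> (sigma_e n div p) dvd d_e n"
proof -
  note p = \<open>prime p\<close> and a = \<open>a \<ge> 1\<close>
  define D where "D = {b. b dvd (a::nat)}"
  have finD: "finite D" unfolding D_def using a by simp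
  have p1: "p > 1" using p prime_gt_1_nat by blast
  have inj: "inj_on (\<lambda>b. p^b) D" using p1 by (auto simp: inj_on_def power_inject_exp)
  have sig: "sigma_e n = (\<Sum>b\<in>D. p^b)"
    unfolding sigma_e_def assms(5) ediv_pp[OF p a] D_def[symmetric]
    using sum.reindex[OF inj] by simp
  define s where "s = (\<Sum>b\<in>D. p^(b-1))"
  have D0: "0 \<notin> D" using a unfolding D_def by auto
  have sp: "sigma_e n = p * s" unfolding sig s_def sum_distrib_left
  proof (rule sum.cong[OF refl])
    fix b assume "b \<in> D" then have "b \<ge> 1" using D0 by (cases b) auto
    then show "p^b = p * p^(b-1)" by (cases b) auto
  qed
  have "1 \<in> D" unfolding D_def by simp
  then have "s = p^(1-1) + (\<Sum>b\<in>D-{1}. p^(b-1))" unfolding s_def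
    using finD by (simp add: sum.remove)
  moreover have "p dvd (\<Sum>b\<in>D-{1}. p^(b-1))"
  proof (rule dvd_sum)
    fix b assume "b \<in> D - {1}" then have "b - 1 \<ge> 1" using D0 by (cases b) auto
    then show "p dvd p^(b-1)" by (cases "b-1") auto
  qed
  ultimately obtain t where st: "s = 1 + p * t" by (auto elim: dvdE)
  have cop: "coprime s p"
  proof -
    have "coprime (1 + p*t) p"
    proof (rule coprimeI)
      fix c assume c1: "c dvd 1 + p*t" and c2: "c dvd p"
      then have "c dvd p*t" by (simp add: dvd_mult2)
      then have "c dvd 1" using c1 by (metis add.commute dvd_add_right_iff)
      then show "is_unit c" by simp
    qed
    then show ?thesis using st by simp
  qed
  have de: "d_e n = card D"
    unfolding d_e_def assms(5) D_def using p a
    by (simp add: prime_factorization_prime_power)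
  have "e_harmonic_type1 n \<longleftrightarrow> p * s dvd p * (p^(a-1) * card D)"
  proof -
    have "n = p * p^(a-1)" using a assms(5) by (cases a) auto
    then show ?thesis unfolding e_harmonic_type1_def sp de by (simp only: mult.assoc)
  qed
  also have "\<dots> \<longleftrightarrow> s dvd p^(a-1) * card D" using p1 by simp
  also have "\<dots> \<longleftrightarrow> s dvd card D"
    using cop by (simp add: coprime_dvd_mult_right_iff coprime_power_right_iff)
  also have "\<dots> \<longleftrightarrow> (sigma_e n div p) dvd d_e n" using sp de p1 by simp
  finally show ?thesis .
qed

end
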